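(* Let $V$ be a finite-dimensional scalar product space, $T$ a self-adjoint operator on $V$, $\lambda$ an eigenvalue of $T$, and $U=T-\lambda I$. Let $x\in K_\lambda$ generate a cycle of generalized eigenvectors of length $p$ (i.e. $p$ is the smallest positive integer with $U^p x=0$), put $v_i=U^{p-i}x$ for $i=1,\dots,p$, and let $H=\operatorname{span}\{v_1,\dots,v_p\}$. If $\langle v_1,v_p\rangle\neq 0$, then there exists $x'\in H$ generating a cycle of generalized eigenvectors $v'_i=U^{p-i}x'$ ($i=1,\dots,p$) of length $p$ which spans $H$, such that $v'_1,\dots,v'_p$ is a skew-normal sequence whose sign is $\operatorname{sgn}\langle v_1,v_p\rangle$ if $\lambda\in\mathbb{R}$, and $1$ if $\lambda\in\mathbb{C}\setminus\mathbb{R}$.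
   Context: A scalar product is a non-degenerate symmetric bilinear form $\langle\cdot,\cdot\rangle$ over $\mathbb{R}$ or $\mathbb{C}$ (bilinear in the complex case). $T$ is self-adjoint if $\langle Tx,y\rangle=\langle x,Ty\rangle$ for all $x,y$. If $V$ is real, non-real eigenvalues and their generalized eigenspaces are taken in the complexification $V^{\mathbb{C}}$ with the bilinear extension of the scalar product and of $T$; when $\lambda$ is real, everything takes place in the real space $V$ (so $x$ is real and $\langle v_1,v_p\rangle$ is real). $K_\lambda=\{x:(T-\lambda I)^m x=0\text{ for some }m\ge1\}$. A sequence $w_1,\dots,w_p$ is a skew-normal sequence of sign $\varepsilon\in\{\pm1\}$ if $\langle w_i,w_j\rangle=\varepsilon$ when $i+j=p+1$ and $0$ otherwise. *)

theory Defs
  imports "HOL-Analysis.Analysis"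
begin

definition scalar_product :: "('a::field^'n \<Rightarrow> 'a^'n \<Rightarrow> 'a) \<Rightarrow> bool" where
  "scalar_product B \<longleftrightarrow>
     (\<forall>x y z. B (x + y) z = B x z + B y z) \<and>
     (\<forall>c x y. B (c *s x) y = c * B x y) \<and>
     (\<forall>x y. B x y = B y x) \<and>
     (\<forall>x. (\<forall>y. B x y = 0) \<longrightarrow> x = 0)"

definition self_adjoint :: "('a::field^'n \<Rightarrow> 'a^'n \<Rightarrow> 'a) \<Rightarrow> 'a^'n^'n \<Rightarrow> bool" where
  "self_adjoint B T \<longleftrightarrow> (\<forall>x y. B (T *v x) y = B x (T *v y))"

definition is_eigenvalue :: "'a::field^'n^'n \<Rightarrow> 'a \<Rightarrow> bool" where
  "is_eigenvalue T lam \<longleftrightarrow> (\<exists>x. x \<noteq> 0 \<and> T *v x = lam *s x)"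

definition Upow :: "'a::field^'n^'n \<Rightarrow> 'a \<Rightarrow> nat \<Rightarrow> 'a^'n \<Rightarrow> 'a^'n" where
  "Upow T lam k x = ((\<lambda>y. T *v y - lam *s y) ^^ k) x"

definition gen_cycle :: "'a::field^'n^'n \<Rightarrow> 'a \<Rightarrow> 'a^'n \<Rightarrow> nat \<Rightarrow> bool" where
  "gen_cycle T lam x p \<longleftrightarrow> 0 < p \<and> Upow T lam p x = 0 \<and>
     (\<forall>k. 0 < k \<and> k < p \<longrightarrow> Upow T lam k x \<noteq> 0)"

definition cyc :: "'a::field^'n^'n \<Rightarrow> 'a \<Rightarrow> 'a^'n \<Rightarrow> nat \<Rightarrow> nat \<Rightarrow> 'a^'n" where
  "cyc T lam x p i = Upow T lam (p - i) x"

definition skew_normal :: "('a::field^'n \<Rightarrow> 'a^'n \<Rightarrow> 'a) \<Rightarrow> (nat \<Rightarrow> 'a^'n) \<Rightarrow> nat \<Rightarrow> 'a \<Rightarrow> bool" where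
  "skew_normal B w p eps \<longleftrightarrow> (eps = 1 \<or> eps = -1) \<and>
     (\<forall>i\<in>{1..p}. \<forall>j\<in>{1..p}. B (w i) (w j) = (if i + j = p + 1 then eps else 0))"

end

theory Submission
  imports Defs "HOL-Computational_Algebra.Formal_Power_Series"
begin

lemma Upow_0[simp]: "Upow T lam 0 x = x" by (simp add: Upow_def)

lemma Upow_Suc: "Upow T lam (Suc k) x = T *v Upow T lam k x - lam *s Upow T lam k x"
  by (simp add: Upow_def)

lemma Upow_add: "Upow T lam (a + b) x = Upow T lam a (Upow T lam b x)"
  by (simp add: Upow_def funpow_add)

lemma Upow_plus: "Upow T lam k (x + y) = Upow T lam k x + Upow T lam k y"
  by (induction k) (simp_all add: Upow_Suc matrix_vector_right_distrib vec.scale_right_distrib algebra_simps)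

lemma Upow_scale: "Upow T lam k (c *s x) = c *s Upow T lam k x"
  by (induction k) (simp_all add: Upow_Suc vector_scalar_commute vec.scale_right_diff_distrib mult.commute)

lemma Upow_zero[simp]: "Upow T lam k 0 = 0"
  by (induction k) (simp_all add: Upow_Suc)

lemma Upow_sum: "Upow T lam k (sum f A) = (\<Sum>a\<in>A. Upow T lam k (f a))"
  by (induction A rule: infinite_finite_induct) (simp_all add: Upow_plus)

lemma Upow_ge: assumes "Upow T lam p x = 0" "p \<le> m" shows "Upow T lam m x = 0"
proof -
  have "m = (m - p) + p" using assms(2) by simp
  then have "Upow T lam m x = Upow T lam (m - p) (Upow T lam p x)" by (metis Upow_add)
  then show ?thesis using assms(1) by simp
qed

context
  fixes B :: "'a::field^'n \<Rightarrow> 'a^'n \<Rightarrow> 'a"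
  assumes sp: "scalar_product B"
begin

lemma sp_add1: "B (x + y) z = B x z + B y z" using sp unfolding scalar_product_def by blast
lemma sp_scale1: "B (c *s x) y = c * B x y" using sp unfolding scalar_product_def by blast
lemma sp_sym: "B x y = B y x" using sp unfolding scalar_product_def by blast
lemma sp_add2: "B z (x + y) = B z x + B z y" by (metis sp_sym sp_add1)
lemma sp_scale2: "B y (c *s x) = c * B y x" by (metis sp_sym sp_scale1)
lemma sp_zero1[simp]: "B 0 y = 0"
proof -
  have "B (0 + 0) y = B 0 y + B 0 y" by (rule sp_add1)
  then have "B 0 y + B 0 y = B 0 y + 0" by simp
  then show ?thesis by (metis add_left_cancel)
qed
lemma sp_zero2[simp]: "B y 0 = 0" by (metis sp_sym sp_zero1)
lemma sp_diff1: "B (x - y) z = B x z - B y z"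
proof -
  have "B ((x - y) + y) z = B (x - y) z + B y z" by (rule sp_add1)
  then show ?thesis by simp
qed
lemma sp_diff2: "B z (x - y) = B z x - B z y" by (metis sp_sym sp_diff1)
lemma sp_sum1: "B (sum f A) y = (\<Sum>a\<in>A. B (f a) y)"
  by (induction A rule: infinite_finite_induct) (simp_all add: sp_add1)
lemma sp_sum2: "B y (sum f A) = (\<Sum>a\<in>A. B y (f a))"
  by (induction A rule: infinite_finite_induct) (simp_all add: sp_add2)

lemma sa_Upow:
  assumes sa: "self_adjoint B T"
  shows "B (Upow T lam k v) w = B v (Upow T lam k w)"
proof (induction k arbitrary: w)
  case 0
  then show ?case by simp
next
  case (Suc k)
  have "B (Upow T lam (Suc k) v) w = B (T *v Upow T lam k v) w - lam * B (Upow T lam k v) w"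
    by (simp add: Upow_Suc sp_diff1 sp_scale1)
  also have "\<dots> = B (Upow T lam k v) (T *v w - lam *s w)"
    using sa by (simp add: self_adjoint_def sp_diff2 sp_scale2)
  also have "\<dots> = B v (Upow T lam k (T *v w - lam *s w))" by (rule Suc)
  also have "\<dots> = B v (Upow T lam (Suc k) w)"
    using Upow_add[of T lam k 1 w] by (simp add: Upow_def)
  finally show ?case .
qed

end

definition Pp :: "'a::field^'n^'n \<Rightarrow> 'a \<Rightarrow> nat \<Rightarrow> 'a fps \<Rightarrow> 'a^'n \<Rightarrow> 'a^'n" where
  "Pp T lam p f v = (\<Sum>k<p. fps_nth f k *s Upow T lam k v)"

lemma Pp_commute: "Upow T lam m (Pp T lam p f v) = Pp T lam p f (Upow T lam m v)"
  unfolding Pp_def Upow_sum Upow_scale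
  by (intro sum.cong refl) (metis Upow_add add.commute)

lemma Pp_zero[simp]: "Pp T lam p f 0 = 0"
  by (simp add: Pp_def)

lemma conv_reindex:
  fixes F :: "nat \<Rightarrow> nat \<Rightarrow> 'b::comm_monoid_add"
  assumes "\<And>i j. p \<le> i + j \<Longrightarrow> F i j = 0"
  shows "(\<Sum>i<p. \<Sum>j<p. F i j) = (\<Sum>k<p. \<Sum>i\<le>k. F i (k - i))"
proof -
  have "(\<Sum>i<p. \<Sum>j<p. F i j) = (\<Sum>(i,j)\<in>{..<p} \<times> {..<p}. F i j)"
    by (simp add: sum.cartesian_product)
  also have "\<dots> = (\<Sum>(i,j)\<in>{(i,j). i + j < p}. F i j)"
    apply (rule sum.mono_neutral_right)
    using assms leI by fastforce+
  also have "\<dots> = (\<Sum>k<p. \<Sum>i\<le>k. F i (k - i))"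
    by (rule sum.triangle_reindex)
  finally show ?thesis .
qed

lemma Pp_comp:
  assumes vp: "Upow T lam p v = 0"
  shows "Pp T lam p f (Pp T lam p g v) = Pp T lam p (f * g) v"
proof -
  have "Pp T lam p f (Pp T lam p g v) = (\<Sum>i<p. \<Sum>j<p. (fps_nth f i * fps_nth g j) *s Upow T lam (i + j) v)"
    unfolding Pp_def Upow_sum Upow_scale
    by (simp add: vec.scale_sum_right Upow_add)
  also have "\<dots> = (\<Sum>k<p. \<Sum>i\<le>k. (fps_nth f i * fps_nth g (k - i)) *s Upow T lam (i + (k - i)) v)"
    by (rule conv_reindex) (simp add: Upow_ge[OF vp])
  also have "\<dots> = (\<Sum>k<p. \<Sum>i\<le>k. (fps_nth f i * fps_nth g (k - i)) *s Upow T lam k v)"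
    by (intro sum.cong refl) simp
  also have "\<dots> = Pp T lam p (f * g) v"
    unfolding Pp_def fps_mult_nth vec.scale_sum_left by (simp add: atLeast0AtMost)
  finally show ?thesis .
qed

lemma Pp_one: assumes "0 < p" shows "Pp T lam p 1 v = v"
proof -
  have "Pp T lam p 1 v = (\<Sum>k<p. if k = 0 then v else 0)"
    unfolding Pp_def by (intro sum.cong refl) simp
  also have "\<dots> = v" using assms by (simp add: sum.delta)
  finally show ?thesis .
qed

lemma Pp_sa:
  assumes sp: "scalar_product B" and sa: "self_adjoint B T"
  shows "B (Pp T lam p f v) w = B v (Pp T lam p f w)"
  unfolding Pp_def by (simp add: sp_sum1[OF sp] sp_sum2[OF sp] sp_scale1[OF sp] sp_scale2[OF sp] sa_Upow[OF sp sa])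

lemma Upow_in_span:
  assumes vp: "Upow T lam p v = 0"
  shows "Upow T lam m v \<in> vec.span (cyc T lam v p ` {1..p})"
proof (cases "m < p")
  case True
  then have "Upow T lam m v = cyc T lam v p (p - m)" by (simp add: cyc_def)
  moreover have "p - m \<in> {1..p}" using True by auto
  ultimately show ?thesis by (metis image_eqI vec.span_base)
next
  case False
  then show ?thesis using Upow_ge[OF vp] by (simp add: vec.span_zero)
qed

lemma Pp_in_span:
  assumes vp: "Upow T lam p v = 0"
  shows "Pp T lam p f (Upow T lam m v) \<in> vec.span (cyc T lam v p ` {1..p})"
  unfolding Pp_def
  by (intro vec.span_sum vec.span_scale) (metis Upow_add Upow_in_span[OF vp])

lemma main_gen:
  fixes B :: "'a::field_char_0^'n \<Rightarrow> 'a^'n \<Rightarrow> 'a"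
  assumes sp: "scalar_product B" and sa: "self_adjoint B T" and gc: "gen_cycle T lam x p"
    and d: "B (cyc T lam x p 1) (cyc T lam x p p) \<noteq> 0"
    and eps: "eps = 1 \<or> eps = -1"
    and s: "s * s = eps / B (cyc T lam x p 1) (cyc T lam x p p)"
  shows "\<exists>x' \<in> vec.span (cyc T lam x p ` {1..p}). gen_cycle T lam x' p \<and>
    vec.span (cyc T lam x' p ` {1..p}) = vec.span (cyc T lam x p ` {1..p}) \<and>
    skew_normal B (cyc T lam x' p) p eps"
proof -
  define c where "c k = B x (Upow T lam k x)" for k
  from gc have p0: "0 < p" and xp: "Upow T lam p x = 0" by (auto simp: gen_cycle_def)
  have c_hi: "c k = 0" if "p \<le> k" for k
    using Upow_ge[OF xp that] sp_zero2[OF sp] by (simp add: c_def)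
  define c0 where "c0 = c (p - 1)"
  have dc: "B (cyc T lam x p 1) (cyc T lam x p p) = c0"
    by (simp add: cyc_def c0_def c_def sp_sym[OF sp])
  hence c0nz: "c0 \<noteq> 0" using d by simp
  define h where "h = Abs_fps (\<lambda>m. c (p - 1 - m) / c0)"
  have h0: "fps_nth h 0 = 1" using c0nz by (simp add: h_def c0_def)
  have key: "(\<Sum>k<p. fps_nth f k * c (k + n)) = c0 * fps_nth (f * h) (p - 1 - n)" if n: "n < p" for f n
  proof -
    have "fps_nth (f * h) (p - 1 - n) = (\<Sum>i=0..p-1-n. fps_nth f i * (c (i + n) / c0))"
      unfolding fps_mult_nth h_def
    proof (intro sum.cong refl)
      fix i assume "i \<in> {0..p-1-n}"
      then have "p - 1 - (p - 1 - n - i) = i + n" using n by auto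
      then show "fps_nth f i * fps_nth (Abs_fps (\<lambda>m. c (p - 1 - m) / c0)) (p - 1 - n - i) = fps_nth f i * (c (i + n) / c0)"
        by simp
    qed
    also have "\<dots> = (\<Sum>i=0..p-1-n. fps_nth f i * c (i + n)) / c0"
      by (simp add: sum_divide_distrib)
    also have "(\<Sum>i=0..p-1-n. fps_nth f i * c (i + n)) = (\<Sum>k<p. fps_nth f k * c (k + n))"
    proof (rule sum.mono_neutral_left)
      show "\<forall>i\<in>{..<p} - {0..p - 1 - n}. fps_nth f i * c (i + n) = 0"
        using c_hi by auto
    qed (use n in auto)
    finally show ?thesis using c0nz by simp
  qed
  define g where "g = fps_const (eps / c0) * inverse h"
  have g0: "fps_nth g 0 = eps / c0" using h0 by (simp add: g_def)
  have epsnz: "eps \<noteq> 0" using eps by auto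
  define q where "q = fps_radical (\<lambda>_ _. s) (Suc 1) g"
  have s2: "s ^ Suc 1 = fps_nth g 0" using s dc g0 by (simp add: power2_eq_square)
  have "q ^ Suc 1 = g"
    using power_radical[of g "\<lambda>_ _. s" 1] s2 g0 epsnz c0nz unfolding q_def by simp
  hence qq: "q * q = g" by (simp add: power2_eq_square)
  have q0: "fps_nth q 0 = s" by (simp add: q_def)
  have snz: "s \<noteq> 0" using s dc epsnz c0nz by auto
  have qqh: "q * q * h = fps_const (eps / c0)"
    using qq h0 by (simp add: g_def mult.assoc inverse_mult_eq_1)
  define x' where "x' = Pp T lam p q x"
  have U': "Upow T lam m x' = Pp T lam p q (Upow T lam m x)" for m
    by (simp add: x'_def Pp_commute)
  have gram: "B (Upow T lam a x') (Upow T lam b x') = (if a + b = p - 1 then eps else 0)" for a b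
  proof -
    have "B (Upow T lam a x') (Upow T lam b x') = B x' (Upow T lam (a + b) x')"
      by (simp add: sa_Upow[OF sp sa] Upow_add)
    also have "\<dots> = B x (Pp T lam p q (Pp T lam p q (Upow T lam (a + b) x)))"
      by (simp add: U' x'_def Pp_sa[OF sp sa] Pp_commute)
    also have "\<dots> = B x (Pp T lam p (q * q) (Upow T lam (a + b) x))"
    proof -
      have "Upow T lam p (Upow T lam (a + b) x) = 0"
        using Upow_ge[OF xp, of "p + (a + b)"] by (simp add: Upow_add)
      then show ?thesis by (simp add: Pp_comp)
    qed
    also have "\<dots> = (\<Sum>k<p. fps_nth (q * q) k * c (k + (a + b)))"
      unfolding Pp_def by (simp add: sp_sum2[OF sp] sp_scale2[OF sp] c_def Upow_add)
    also have "\<dots> = (if a + b = p - 1 then eps else 0)"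
    proof (cases "a + b < p")
      case True
      then have "(\<Sum>k<p. fps_nth (q * q) k * c (k + (a + b))) = c0 * fps_nth (q * q * h) (p - 1 - (a + b))"
        by (rule key)
      also have "\<dots> = (if a + b = p - 1 then eps else 0)"
        using True c0nz by (simp add: qqh) linarith
      finally show ?thesis .
    next
      case False
      then show ?thesis using c_hi p0 by simp
    qed
    finally show ?thesis .
  qed
  have x'p: "Upow T lam p x' = 0" by (simp add: U' xp)
  have gc': "gen_cycle T lam x' p"
    unfolding gen_cycle_def
  proof (intro conjI allI impI p0 x'p)
    fix k assume k: "0 < k \<and> k < p"
    show "Upow T lam k x' \<noteq> 0"
    proof
      assume "Upow T lam k x' = 0"
      then have "B (Upow T lam k x') (Upow T lam (p - 1 - k) x') = 0" by (simp add: sp_zero1[OF sp])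
      moreover have "B (Upow T lam k x') (Upow T lam (p - 1 - k) x') = eps"
        using gram[of k "p - 1 - k"] k by simp
      ultimately show False using epsnz by simp
    qed
  qed
  have skew: "skew_normal B (cyc T lam x' p) p eps"
    unfolding skew_normal_def
  proof (intro conjI ballI eps)
    fix i j assume "i \<in> {1..p}" "j \<in> {1..p}"
    then have "((p - i) + (p - j) = p - 1) = (i + j = p + 1)" by auto
    then show "B (cyc T lam x' p i) (cyc T lam x' p j) = (if i + j = p + 1 then eps else 0)"
      by (simp add: cyc_def gram)
  qed
  have inspan: "x' \<in> vec.span (cyc T lam x p ` {1..p})"
    using Pp_in_span[OF xp, of q 0] by (simp add: x'_def)
  have xback: "Pp T lam p (inverse q) x' = x"
    using Pp_comp[OF xp, of "inverse q" q] q0 snz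
    by (simp add: x'_def inverse_mult_eq_1 Pp_one[OF p0])
  have speq: "vec.span (cyc T lam x' p ` {1..p}) = vec.span (cyc T lam x p ` {1..p})"
    unfolding vec.span_eq
  proof (intro conjI subsetI)
    fix y assume "y \<in> cyc T lam x' p ` {1..p}"
    then obtain i where "y = Upow T lam (p - i) x'" by (auto simp: cyc_def)
    then show "y \<in> vec.span (cyc T lam x p ` {1..p})"
      using Pp_in_span[OF xp, of q "p - i"] by (simp add: U')
  next
    fix y assume "y \<in> cyc T lam x p ` {1..p}"
    then obtain i where "y = Upow T lam (p - i) x" by (auto simp: cyc_def)
    then have "y = Pp T lam p (inverse q) (Upow T lam (p - i) x')"
      using xback by (metis Pp_commute)
    then show "y \<in> vec.span (cyc T lam x' p ` {1..p})"
      using Pp_in_span[OF x'p, of "inverse q" "p - i"] by simp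
  qed
  show ?thesis using inspan gc' speq skew by blast
qed

theorem mainTheorem5:
  shows
  "(\<forall>(B :: real^'n \<Rightarrow> real^'n \<Rightarrow> real) (T :: real^'n^'n) (lam :: real) x p.
      scalar_product B \<and> self_adjoint B T \<and> is_eigenvalue T lam \<and>
      gen_cycle T lam x p \<and> B (cyc T lam x p 1) (cyc T lam x p p) \<noteq> 0 \<longrightarrow>
      (\<exists>x' \<in> vec.span (cyc T lam x p ` {1..p}).
         gen_cycle T lam x' p \<and>
         vec.span (cyc T lam x' p ` {1..p}) = vec.span (cyc T lam x p ` {1..p}) \<and>
         skew_normal B (cyc T lam x' p) p (sgn (B (cyc T lam x p 1) (cyc T lam x p p)))))
   \<and>
   (\<forall>(B :: complex^'m \<Rightarrow> complex^'m \<Rightarrow> complex) (T :: complex^'m^'m) (lam :: complex) x p.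
      scalar_product B \<and> self_adjoint B T \<and> is_eigenvalue T lam \<and> lam \<notin> \<real> \<and>
      gen_cycle T lam x p \<and> B (cyc T lam x p 1) (cyc T lam x p p) \<noteq> 0 \<longrightarrow>
      (\<exists>x' \<in> vec.span (cyc T lam x p ` {1..p}).
         gen_cycle T lam x' p \<and>
         vec.span (cyc T lam x' p ` {1..p}) = vec.span (cyc T lam x p ` {1..p}) \<and>
         skew_normal B (cyc T lam x' p) p 1))"
proof (intro conjI allI impI; elim conjE)
  fix B :: "real^'n \<Rightarrow> real^'n \<Rightarrow> real" and T :: "real^'n^'n" and lam :: real and x p
  assume sp: "scalar_product B" and sa: "self_adjoint B T" and gc: "gen_cycle T lam x p"
    and d: "B (cyc T lam x p 1) (cyc T lam x p p) \<noteq> 0"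
  let ?d = "B (cyc T lam x p 1) (cyc T lam x p p)"
  have e: "sgn ?d = 1 \<or> sgn ?d = -1" using d by (auto simp: sgn_real_def)
  have s: "sqrt (1 / \<bar>?d\<bar>) * sqrt (1 / \<bar>?d\<bar>) = sgn ?d / ?d"
    using d by (simp add: sgn_real_def)
  show "\<exists>x' \<in> vec.span (cyc T lam x p ` {1..p}).
         gen_cycle T lam x' p \<and>
         vec.span (cyc T lam x' p ` {1..p}) = vec.span (cyc T lam x p ` {1..p}) \<and>
         skew_normal B (cyc T lam x' p) p (sgn ?d)"
    by (rule main_gen[OF sp sa gc d e s])
next
  fix B :: "complex^'m \<Rightarrow> complex^'m \<Rightarrow> complex" and T :: "complex^'m^'m" and lam :: complex and x p
  assume sp: "scalar_product B" and sa: "self_adjoint B T" and gc: "gen_cycle T lam x p"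
    and d: "B (cyc T lam x p 1) (cyc T lam x p p) \<noteq> 0"
  let ?d = "B (cyc T lam x p 1) (cyc T lam x p p)"
  have s: "csqrt (1 / ?d) * csqrt (1 / ?d) = 1 / ?d"
    by (metis power2_csqrt power2_eq_square)
  show "\<exists>x' \<in> vec.span (cyc T lam x p ` {1..p}).
         gen_cycle T lam x' p \<and>
         vec.span (cyc T lam x' p ` {1..p}) = vec.span (cyc T lam x p ` {1..p}) \<and>
         skew_normal B (cyc T lam x' p) p 1"
    by (rule main_gen[OF sp sa gc d _ s]) simp
qed

end
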